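(* Fix $d\ge3$, let $C$ be an indeterminate, and let $\phi_{(d,C)}(x)=x^d-Cdx^{d-1}+C(d-1)\in\mathbb{Z}[C][x]$. For every $n\ge1$, all roots in $\overline{\mathbb{Q}}$ of the polynomial $\phi_{(C,n)}(0):=\phi_{(d,C)}^n(0)\in\mathbb{Z}[C]$ are simple.
   Context: $\phi^n$ denotes the $n$-fold iterate in the variable $x$. *)

theory Defs
  imports Complex_Main "HOL-Computational_Algebra.Polynomial"
begin

text \<open>phi_(d,C)(x) = x^d - C d x^(d-1) + C (d-1), as a map on Z[C] (C = [:0,1:]).\<close>
definition phiC :: "nat \<Rightarrow> int poly \<Rightarrow> int poly" where
  "phiC d x = x ^ d - [:0, int d:] * x ^ (d - 1) + [:0, int d - 1:]"

definition phi_iter0 :: "nat \<Rightarrow> nat \<Rightarrow> int poly" where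
  "phi_iter0 d n = (phiC d ^^ n) 0"

end

theory Submission
  imports Defs "HOL-Computational_Algebra.Primes" "Berlekamp_Zassenhaus.Square_Free_Int_To_Square_Free_GFp"
begin

hide_const (open) Coset.order module.smult up_ring.coeff

lemma lemB:
  fixes q r c :: "int poly" and p :: int
  assumes pr: "prime p" and eq: "q * r = smult p c - 1" and dq: "degree q \<ge> 1"
    and nl: "\<not> p dvd lead_coeff q"
  shows False
proof (cases "\<forall>j. p dvd coeff r j")
  case True
  have "coeff (q*r) 0 = coeff q 0 * coeff r 0" by (simp add: coeff_mult)
  hence "p dvd coeff (q*r) 0" using True by simp
  hence "p dvd p * coeff c 0 - 1" using eq by simp
  hence "p dvd p * coeff c 0 - (p * coeff c 0 - 1)"
    using dvd_diff[OF dvd_triv_left[of p "coeff c 0"]] by blast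
  hence "p dvd 1" by simp
  thus False using pr not_prime_unit by blast
next
  case False
  define J where "J = {j. \<not> p dvd coeff r j}"
  have fin: "finite J"
  proof (rule finite_subset[of _ "{..degree r}"])
    show "J \<subseteq> {..degree r}"
    proof
      fix j assume "j \<in> J"
      hence "coeff r j \<noteq> 0" unfolding J_def by auto
      thus "j \<in> {..degree r}" using le_degree by blast
    qed
  qed simp
  have ne: "J \<noteq> {}" using False J_def by auto
  define j where "j = Max J"
  have jJ: "\<not> p dvd coeff r j" using Max_in[OF fin ne] unfolding j_def J_def by blast
  have big: "p dvd coeff r i" if "i > j" for i
  proof (rule ccontr)
    assume "\<not> p dvd coeff r i"
    hence "i \<in> J" unfolding J_def by blast
    hence "i \<le> j" unfolding j_def using Max_ge[OF fin] by blast
    thus False using that by linarith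
  qed
  define k where "k = degree q"
  let ?a = "\<lambda>i. coeff q i * coeff r (k + j - i)"
  have s: "coeff (q*r) (k+j) = ?a k + (\<Sum>i\<in>{..k+j} - {k}. ?a i)"
    unfolding coeff_mult by (rule sum.remove) auto
  have sd: "p dvd (\<Sum>i\<in>{..k+j} - {k}. ?a i)"
  proof (rule dvd_sum)
    fix i assume i: "i \<in> {..k+j} - {k}"
    show "p dvd ?a i"
    proof (cases "i < k")
      case True
      hence "k + j - i > j" by linarith
      hence "p dvd coeff r (k + j - i)" by (rule big)
      then show ?thesis by (rule dvd_mult)
    next
      case False then have "i > k" using i by auto
      then have "coeff q i = 0" unfolding k_def by (simp add: coeff_eq_0)
      then show ?thesis by simp
    qed
  qed
  have cd: "p dvd coeff (q*r) (k+j)"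
  proof -
    have "k + j \<noteq> 0" using dq k_def by auto
    then have "coeff (q*r) (k+j) = p * coeff c (k+j)" using eq by simp
    thus ?thesis by simp
  qed
  have "p dvd coeff (q*r) (k+j) - (\<Sum>i\<in>{..k+j} - {k}. ?a i)" by (rule dvd_diff[OF cd sd])
  hence "p dvd ?a k" using s by simp
  hence "p dvd lead_coeff q * coeff r j" unfolding k_def by simp
  hence "p dvd lead_coeff q \<or> p dvd coeff r j" using pr prime_dvd_mult_iff by blast
  thus False using nl jJ by blast
qed

lemma pderiv_phiC:
  assumes "d \<ge> 1"
  shows "\<exists>A. pderiv (phiC d g) = smult (int d) A + [:int d - 1:]"
proof -
  have e0: "smult (int d) [:0,1:] = [:0, int d:]"
    by (simp only: smult_pCons mult_zero_right mult_1_right smult_0_right)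
  have e: "[:0, int d:] * g^(d-1) = smult (int d) ([:0,1:] * g^(d-1))"
    unfolding mult_smult_left[symmetric] e0 ..
  have p1: "pderiv [:0, int d - 1:] = [:int d - 1:]"
    by (simp only: pderiv_pCons pderiv_0 pCons_0_0 add_0_left add_0_right)
  have "pderiv (phiC d g) = pderiv (g^d) - smult (int d) (pderiv ([:0,1:] * g^(d-1))) + [:int d - 1:]"
    unfolding phiC_def e by (simp only: pderiv_add pderiv_diff pderiv_smult p1)
  also have "\<dots> = smult (int d) (g^(d-1)*pderiv g - pderiv ([:0,1:] * g^(d-1))) + [:int d - 1:]"
    by (simp only: pderiv_power smult_diff_right)
  finally show ?thesis by blast
qed

lemma pderiv_phiC_mod:
  assumes "d \<ge> 1" and "P dvd int d"
  shows "\<exists>c. pderiv (phiC d g) = smult P c - 1"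
proof -
  obtain A where A: "pderiv (phiC d g) = smult (int d) A + [:int d - 1:]"
    using pderiv_phiC[OF assms(1)] by blast
  obtain m where m: "int d = P * m" using assms(2) by blast
  have o: "[:P*m - 1:] = [:P*m:] - 1" by (simp only: one_pCons diff_pCons diff_zero)
  have "pderiv (phiC d g) = smult (P*m) A + ([:P*m:] - 1)" unfolding A m o ..
  also have "\<dots> = smult P (smult m A + [:m:]) - 1"
    by (simp only: smult_add_right smult_smult smult_pCons smult_0_right add_diff_eq)
  finally show ?thesis by blast
qed

lemma coeff_lin: "coeff ([:0, a:] * x) (Suc k) = a * (coeff x k :: int)"
  by simp

lemma coeff_lin2: "coeff [:0, a:] (Suc (Suc k)) = (0::int)"
  by simp

lemma phi_iter0_Suc: "phi_iter0 d (Suc n) = phiC d (phi_iter0 d n)"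
  unfolding phi_iter0_def by simp

lemma deg_lead:
  assumes d: "d \<ge> 3" and P: "prime P" and Pd: "P dvd int d"
  shows "n \<ge> 1 \<Longrightarrow> degree (phi_iter0 d n) = d^(n-1) \<and> \<not> P dvd lead_coeff (phi_iter0 d n)"
proof (induction n)
  case 0 then show ?case by simp
next
  case (Suc n)
  show ?case
  proof (cases "n = 0")
    case True
    have "phi_iter0 d 1 = phiC d 0" using phi_iter0_Suc[of d 0] by (simp add: phi_iter0_def)
    also have "\<dots> = [:0, int d - 1:]" unfolding phiC_def using d by (simp add: zero_power)
    finally have e: "phi_iter0 d 1 = [:0, int d - 1:]" .
    have nz: "int d - 1 \<noteq> 0" using d by simp
    have "\<not> P dvd int d - 1"
    proof
      assume "P dvd int d - 1"
      hence "P dvd int d - (int d - 1)" using dvd_diff[OF Pd] by blast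
      hence "P dvd 1" by simp
      thus False using P by (meson not_prime_unit)
    qed
    then show ?thesis using True e nz by simp
  next
    case False
    then have IH: "degree (phi_iter0 d n) = d^(n-1)" "\<not> P dvd lead_coeff (phi_iter0 d n)"
      using Suc.IH by auto
    define g where "g = phi_iter0 d n"
    define N where "N = d^(n-1)"
    define L where "L = lead_coeff g"
    have N1: "N \<ge> 1" unfolding N_def using d by simp
    have dg: "degree g = N" using IH g_def N_def by simp
    have nL: "\<not> P dvd L" using IH g_def L_def by simp
    have g0: "g \<noteq> 0" using nL L_def by auto
    define f where "f = phiC d g"
    have fe: "phi_iter0 d (Suc n) = f" unfolding f_def g_def by (simp add: phi_iter0_Suc)
    have dN3: "d * N \<ge> 3" 
    proof -
      have "d * 1 \<le> d * N" by (rule mult_le_mono2[OF N1])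
      thus ?thesis using d by linarith
    qed
    have c1: "coeff (g^d) (d*N) = L^d"
    proof -
      have "degree (g^d) = d * N" using degree_power_eq[OF g0] dg by simp
      thus ?thesis using lead_coeff_power[of g d] L_def by simp
    qed
    define k where "k = d*N - 1"
    have k: "d * N = Suc k" using dN3 unfolding k_def by linarith
    have c2: "coeff ([:0, int d:] * g^(d-1)) (d*N) = int d * coeff (g^(d-1)) k"
      unfolding k by (rule coeff_lin)
    have "d * N = Suc (Suc (d*N - 2))" using dN3 by linarith
    then obtain k2 where k2: "d * N = Suc (Suc k2)" by blast
    have c3: "coeff [:0, int d - 1:] (d*N) = 0" unfolding k2 by (rule coeff_lin2)
    have cf0: "coeff f (d*N) = L^d - int d * coeff (g^(d-1)) k + 0"
      by (simp only: f_def phiC_def coeff_add coeff_diff c1 c2 c3)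
    hence cf: "coeff f (d*N) = L^d - int d * coeff (g^(d-1)) k" by simp
    have ncf: "\<not> P dvd coeff f (d*N)"
    proof
      assume "P dvd coeff f (d*N)"
      hence h1: "P dvd L^d - int d * coeff (g^(d-1)) k" using cf by simp
      have h2: "P dvd int d * coeff (g^(d-1)) k" using Pd by simp
      have "P dvd (L^d - int d * coeff (g^(d-1)) k) + int d * coeff (g^(d-1)) k"
        by (rule dvd_add[OF h1 h2])
      hence "P dvd L^d" by simp
      hence "P dvd L" using P prime_dvd_power by blast
      thus False using nL by simp
    qed
    have degle: "degree f \<le> d * N"
    proof -
      have a: "degree (g^d) \<le> d * N" using degree_power_le[of g d] dg by (simp add: mult.commute)
      have "degree (g^(d-1)) \<le> N * (d-1)" using degree_power_le[of g "d-1"] dg by simp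
      hence "degree ([:0, int d:] * g^(d-1)) \<le> 1 + N * (d-1)"
        using degree_mult_le[of "[:0, int d:]" "g^(d-1)"] by simp
      moreover have "1 + N * (d-1) \<le> d * N"
      proof -
        have "d * N = N * (d - 1) + N" using d by (cases d) (auto simp: algebra_simps)
        thus ?thesis using N1 by linarith
      qed
      ultimately have b: "degree ([:0, int d:] * g^(d-1)) \<le> d * N" by linarith
      have "degree [:0, int d - 1:] \<le> 1" by (rule order_trans[OF degree_pCons_le]) simp
      hence c: "degree [:0, int d - 1:] \<le> d * N" using dN3 by linarith
      show ?thesis unfolding f_def phiC_def
        by (intro degree_add_le degree_diff_le a b c)
    qed
    have cnz: "coeff f (d*N) \<noteq> 0" using ncf by auto
    have "degree f = d * N" using degle le_degree[OF cnz] by simp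
    moreover have "d * N = d ^ (Suc n - 1)" unfolding N_def using False
      by (cases n) auto
    ultimately show ?thesis using fe ncf by simp
  qed
qed


lemma main_root:
  fixes f c :: "int poly" and P :: int and z :: complex
  assumes P: "prime P" and nl: "\<not> P dvd lead_coeff f" and der: "pderiv f = smult P c - 1"
    and root: "poly (map_poly of_int f) z = 0"
  shows "order z (map_poly of_int f) = 1"
proof -
  let ?F = "map_poly (of_int :: int \<Rightarrow> complex) f"
  have f0: "f \<noteq> 0" using nl by auto
  have F0: "?F \<noteq> 0" using f0 by simp
  have ord: "order z ?F = Suc (order z (pderiv ?F))" by (rule order_pderiv[OF F0 root])
  have pd: "pderiv ?F = map_poly of_int (pderiv f)" by (simp add: of_int_hom.map_poly_pderiv)
  have "order z (pderiv ?F) = 0"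
  proof (rule ccontr)
    assume nz: "order z (pderiv ?F) \<noteq> 0"
    have r2: "poly (pderiv ?F) z = 0" using nz order_root by blast
    define g where "g = gcd f (pderiv f)"
    define Gq where "Gq = gcd (of_int_poly f :: rat poly) (of_int_poly (pderiv f))"
    have g0: "g \<noteq> 0" using f0 unfolding g_def by simp
    have Gq: "Gq = smult (inverse (of_int (lead_coeff g))) (of_int_poly g)"
      unfolding Gq_def g_def by (rule gcd_rat_to_gcd_int)
    have hom: "map_poly (of_rat :: rat \<Rightarrow> complex) (gcd p q) = gcd (map_poly of_rat p) (map_poly of_rat q)" for p q
      by (rule field_hom'.map_poly_gcd) unfold_locales
    have mm: "map_poly (of_rat :: rat \<Rightarrow> complex) (of_int_poly h) = map_poly of_int h" for h :: "int poly"
      by (subst map_poly_map_poly) (auto simp: o_def)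
    have G: "map_poly (of_rat :: rat \<Rightarrow> complex) Gq = gcd ?F (pderiv ?F)"
      unfolding Gq_def hom mm pd ..
    have d1: "[:-z, 1:] dvd ?F" using root by (simp add: poly_eq_0_iff_dvd)
    have d2: "[:-z, 1:] dvd pderiv ?F" using r2 by (simp add: poly_eq_0_iff_dvd)
    have dG: "[:-z, 1:] dvd gcd ?F (pderiv ?F)" using d1 d2 by simp
    have Gn0: "gcd ?F (pderiv ?F) \<noteq> 0" using F0 by simp
    have "degree [:-z, 1:] \<le> degree (gcd ?F (pderiv ?F))" by (rule dvd_imp_degree_le[OF dG Gn0])
    hence "1 \<le> degree (gcd ?F (pderiv ?F))" by simp
    also have "degree (gcd ?F (pderiv ?F)) = degree Gq" unfolding G[symmetric] by simp
    also have "degree Gq = degree g" unfolding Gq using g0 by simp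
    finally have dg: "1 \<le> degree g" .
    have "g dvd f" unfolding g_def by simp
    then obtain h where fh: "f = g * h" by blast
    have "lead_coeff f = lead_coeff g * lead_coeff h" unfolding fh by (simp add: lead_coeff_mult)
    hence ng: "\<not> P dvd lead_coeff g" using nl by (metis dvd_mult2)
    have "g dvd pderiv f" unfolding g_def by simp
    then obtain r where gr: "pderiv f = g * r" by blast
    show False by (rule lemB[OF P _ dg ng, of r c]) (use gr der in simp)
  qed
  thus ?thesis using ord by simp
qed

theorem lemma5p2:
  fixes d n :: nat
  assumes "d \<ge> 3" and "n \<ge> 1"
  shows "\<forall>z::complex. poly (map_poly of_int (phi_iter0 d n)) z = 0 \<longrightarrow>
           order z (map_poly of_int (phi_iter0 d n)) = 1"
proof (intro allI impI)
  fix z :: complex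
  assume root: "poly (map_poly of_int (phi_iter0 d n)) z = 0"
  have "d \<noteq> 1" using assms by simp
  then obtain p :: nat where p: "prime p" "p dvd d" using prime_factor_nat by blast
  define P where "P = int p"
  have P: "prime P" unfolding P_def using p by simp
  have Pd: "P dvd int d" unfolding P_def using p by simp
  obtain m where n: "n = Suc m" using assms by (cases n) auto
  have e: "phi_iter0 d n = phiC d (phi_iter0 d m)" unfolding n by (rule phi_iter0_Suc)
  obtain c where c: "pderiv (phi_iter0 d n) = smult P c - 1"
    unfolding e using pderiv_phiC_mod[of d P] Pd assms by auto
  have nl: "\<not> P dvd lead_coeff (phi_iter0 d n)" using deg_lead[OF assms(1) P Pd assms(2)] by blast
  show "order z (map_poly of_int (phi_iter0 d n)) = 1"
    by (rule main_root[OF P nl c root])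
qed

end
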